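(* In the setting described in the context, the mapping $\psi^a$ is a monotone $\gamma$-CRS with regards to $h$.
   Context: Let $I=\{1,\dots,n\}$ be a set of items, $B$ a positive integer, $[B]=\{1,\dots,B\}$, $[0;B]=\{0,1,\dots,B\}$; for $u,w\in[0;B]^I$, $u\le w$ means coordinatewise. Let $f:[0;B]^I\to\mathbb{R}_{\ge0}$ be monotone and lattice submodular ($f(u\vee s\mathbf{1}_i)-f(u)\ge f(w\vee s\mathbf{1}_i)-f(w)$ for all $u\le w$, $s\in[0;B]$, $i\in I$, with $\vee$ the coordinatewise max and $\mathbf{1}_i$ the $i$-th unit vector). Each item $i$ has a random state $\Phi(i)\in[B]$, independent across items, with known distribution $p_i(s)=\Pr[\Phi(i)=s]$. Item $i$ in state $s$ has a nonnegative integer cost $c_i(s)$, with $c_i(s)\ge c_i(s')$ whenever $s\ge s'$. $C$ is a positive integer budget and $\mathcal{I}^{out}\subseteq 2^I$ is a downward-closed family. For $S\subseteq I$ and a realization $\phi\in[B]^I$, $\phi_S\in[0;B]^I$ equals $\phi(i)$ for $i\in S$ and $0$ otherwise; $\overline{f}(S)=\mathbb{E}[f(\Phi_S)]$, and $F(\overline{x})=\sum_{U\subseteq I}\prod_{i\in U}\overline{x}(i)\prod_{i\notin U}(1-\overline{x}(i))\overline{f}(U)$ is the multilinear extension. Let $P_{\mathcal{I}^{out}}=\mathrm{conv}\{\mathbf{1}_S: S\in\mathcal{I}^{out}\}$. (β,γ)-balanced CRS: for $\beta,\gamma\in[0,1]$, a monotone $(\beta,\gamma)$-balanced CRS for $\mathcal{I}^{out}$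 is a (possibly randomized) scheme that, for any $\overline{z}\in\beta\cdot P_{\mathcal{I}^{out}}$ and the random set $R$ containing each $i$ independently with probability $\overline{z}(i)$, maps $R$ to $\chi(R)\subseteq R$ with $\chi(R)\in\mathcal{I}^{out}$, such that $\Pr[i\in\chi(R)\mid i\in R]\ge\gamma$ for all $i$ (probability over $R$ and the scheme's randomness), and monotone: for $i\in R\subseteq R'$, $\Pr[i\in\chi(R)]\ge\Pr[i\in\chi(R')]$. Problem P1: variables $x(i,t)\ge0$ for $i\in I$, $t\in\{1,\dots,C-c_i(B)\}$, with $\overline{x}(i)=\sum_{t=1}^{C-c_i(B)}x(i,t)$; maximize $F(\overline{x})$ subject to $\overline{x}(i)\le1$, $\overline{x}\in P_{\mathcal{I}^{out}}$, and for all $t\in\{1,\dots,C\}$: $\sum_{i\in I}\mathbb{E}[\min\{c_i(\Phi(i)),t\}]\sum_{t'=1}^{t}x(i,t')\le 2t$. Assume a monotone $(\beta,\gamma)$-balanced CRS $\chi^{io}$ for $\mathcal{I}^{out}$ exists. Let $y$ be the solution of P1 computed by the stochastic continuous greedy algorithm of Asadpour and Nazerzadeh (2016) with stopping time $l=\min\{\beta,1/4\}$ and step size $\delta=o(n^{-3})$, with $\overline{y}(i)=\sum_t y(i,t)$. Distribution $h$: the random vector $v\in[0;B]^I$ has independent coordinates with $\Pr[v(i)=j]=h(i,j)=p_i(j)\overline{y}(i)$ for $j\in[B]$ and $\Pr[v(i)=0]=h(i,0)=1-\overline{y}(i)$. Let $R(v)=\{i: v(i)\ne0\}$. Mapping $\psi^a$: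 apply $\chi^{io}$ (with $\overline{z}=\overline{y}$) to $R(v)$; set $\psi^a(v)(i)=v(i)$ if $i\in\chi^{io}(R(v))$ and $\psi^a(v)(i)=0$ otherwise. An $\alpha$-CRS with regards to $h$ is a (possibly randomized) mapping $\psi$ on $[0;B]^I$ with $\psi(v)(i)\in\{0,v(i)\}$ for all $i$, and $\Pr[\psi(v)(i)=j\mid v(i)=j]\ge\alpha$ for all $i\in I$, $j\in[B]$ (probability over $v\sim h$ and the randomness of $\psi$). It is monotone if for all $u,w$ with $u(i)=w(i)$ and $u\le w$, $\Pr[\psi(u)(i)=u(i)]\ge\Pr[\psi(w)(i)=w(i)]$ (probability over the randomness of $\psi$ only). *)

theory Defs
  imports "HOL-Probability.Probability"
begin

(* P_{I^out} = conv { 1_S : S \<in> F }, written out as the set of convex combinations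
   of the indicator vectors of the (finitely many) members of F. *)
definition indep_polytope :: "'a set \<Rightarrow> 'a set set \<Rightarrow> ('a \<Rightarrow> real) set" where
  "indep_polytope I F = {x. \<exists>c :: 'a set \<Rightarrow> real.
      (\<forall>S\<in>F. c S \<ge> 0) \<and> (\<Sum>S\<in>F. c S) = 1 \<and>
      x = (\<lambda>i. \<Sum>S\<in>F. c S * (if i \<in> S then 1 else 0))}"

definition scaled_polytope :: "real \<Rightarrow> ('a \<Rightarrow> real) set \<Rightarrow> ('a \<Rightarrow> real) set" where
  "scaled_polytope b P = {(\<lambda>i. b * x i) | x. x \<in> P}"

definition indep_random_set :: "'a set \<Rightarrow> ('a \<Rightarrow> real) \<Rightarrow> 'a set pmf" where
  "indep_random_set I z =
     map_pmf (\<lambda>b. {i\<in>I. b i}) (Pi_pmf I False (\<lambda>i. bernoulli_pmf (z i)))"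

definition downward_closed :: "'a set set \<Rightarrow> bool" where
  "downward_closed F \<longleftrightarrow> (\<forall>S\<in>F. \<forall>T. T \<subseteq> S \<longrightarrow> T \<in> F)"

(* chi z R : the (randomized) output of the scheme, as a distribution over subsets,
   when run with parameter vector z on the set R. *)
definition monotone_balanced_CRS ::
  "'a set \<Rightarrow> 'a set set \<Rightarrow> real \<Rightarrow> real \<Rightarrow> (('a \<Rightarrow> real) \<Rightarrow> 'a set \<Rightarrow> 'a set pmf) \<Rightarrow> bool" where
  "monotone_balanced_CRS I F \<beta> \<gamma> chi \<longleftrightarrow>
     (\<forall>z \<in> scaled_polytope \<beta> (indep_polytope I F).
        (\<forall>R. R \<subseteq> I \<longrightarrow> (\<forall>S \<in> set_pmf (chi z R). S \<subseteq> R \<and> S \<in> F)) \<and>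
        (\<forall>i\<in>I. measure_pmf.prob (bind_pmf (indep_random_set I z) (\<lambda>R. map_pmf (\<lambda>S. (R, S)) (chi z R)))
                   {(R, S). i \<in> S \<and> i \<in> R}
                 \<ge> \<gamma> * measure_pmf.prob (indep_random_set I z) {R. i \<in> R}) \<and>
        (\<forall>i R R'. i \<in> R \<longrightarrow> R \<subseteq> R' \<longrightarrow> R' \<subseteq> I \<longrightarrow>
            measure_pmf.prob (chi z R) {S. i \<in> S} \<ge> measure_pmf.prob (chi z R') {S. i \<in> S}))"

(* [0;B]^I, vectors as functions vanishing outside I *)
definition lattice_dom :: "'a set \<Rightarrow> nat \<Rightarrow> ('a \<Rightarrow> nat) set" where
  "lattice_dom I B = {v. \<forall>i. (i \<in> I \<longrightarrow> v i \<le> B) \<and> (i \<notin> I \<longrightarrow> v i = 0)}"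

(* the distribution h: independent coordinates, Pr[v i = j] = p_i(j) * ybar i for j \<ge> 1,
   Pr[v i = 0] = 1 - ybar i *)
definition h_dist :: "'a set \<Rightarrow> ('a \<Rightarrow> nat pmf) \<Rightarrow> ('a \<Rightarrow> real) \<Rightarrow> ('a \<Rightarrow> nat) pmf" where
  "h_dist I p ybar =
     Pi_pmf I 0 (\<lambda>i. bind_pmf (bernoulli_pmf (ybar i)) (\<lambda>b. if b then p i else return_pmf 0))"

definition CRS_wrt :: "'a set \<Rightarrow> nat \<Rightarrow> ('a \<Rightarrow> nat) pmf \<Rightarrow> real \<Rightarrow> (('a \<Rightarrow> nat) \<Rightarrow> ('a \<Rightarrow> nat) pmf) \<Rightarrow> bool" where
  "CRS_wrt I B h \<alpha> \<psi> \<longleftrightarrow>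
     (\<forall>v \<in> lattice_dom I B. \<forall>w \<in> set_pmf (\<psi> v). \<forall>i. w i = 0 \<or> w i = v i) \<and>
     (\<forall>i\<in>I. \<forall>j\<in>{1..B}.
        measure_pmf.prob (bind_pmf h (\<lambda>v. map_pmf (\<lambda>w. (v, w)) (\<psi> v))) {(v, w). w i = j \<and> v i = j}
          \<ge> \<alpha> * measure_pmf.prob h {v. v i = j})"

definition monotone_CRS :: "'a set \<Rightarrow> nat \<Rightarrow> (('a \<Rightarrow> nat) \<Rightarrow> ('a \<Rightarrow> nat) pmf) \<Rightarrow> bool" where
  "monotone_CRS I B \<psi> \<longleftrightarrow>
     (\<forall>u \<in> lattice_dom I B. \<forall>w \<in> lattice_dom I B. \<forall>i \<in> I.
        u i = w i \<longrightarrow> (\<forall>k. u k \<le> w k) \<longrightarrow>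
        measure_pmf.prob (\<psi> u) {x. x i = u i} \<ge> measure_pmf.prob (\<psi> w) {x. x i = w i})"

definition psi_a :: "'a set \<Rightarrow> (('a \<Rightarrow> real) \<Rightarrow> 'a set \<Rightarrow> 'a set pmf) \<Rightarrow> ('a \<Rightarrow> real)
                      \<Rightarrow> ('a \<Rightarrow> nat) \<Rightarrow> ('a \<Rightarrow> nat) pmf" where
  "psi_a I chi ybar v =
     map_pmf (\<lambda>S i. if i \<in> S then v i else 0) (chi ybar {i\<in>I. v i \<noteq> 0})"

end

theory Submission
  imports Defs
begin

lemma Pi_nn_split:
  assumes "finite I" "i \<in> I"
  shows "(\<integral>\<^sup>+v. f v \<partial>Pi_pmf I d D) =
         (\<integral>\<^sup>+a. \<integral>\<^sup>+g. f (g(i:=a)) \<partial>Pi_pmf (I-{i}) d D \<partial>D i)"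
proof -
  have "I = insert i (I-{i})" using assms by auto
  then have "Pi_pmf I d D = map_pmf (\<lambda>(y,f). f(i:=y)) (pair_pmf (D i) (Pi_pmf (I-{i}) d D))"
    using Pi_pmf_insert[of "I-{i}" i d D] assms by simp
  then show ?thesis by (simp add: nn_integral_pair_pmf')
qed

lemma scaled_mono:
  assumes "finite I" "F \<subseteq> Pow I" "downward_closed F" "0 \<le> \<beta>"
    and "y \<in> scaled_polytope (min \<beta> (1/4)) (indep_polytope I F)"
  shows "y \<in> scaled_polytope \<beta> (indep_polytope I F)"
proof -
  obtain x c where y: "y = (\<lambda>i. min \<beta> (1/4) * x i)" and c: "\<forall>S\<in>F. c S \<ge> 0" "(\<Sum>S\<in>F. c S) = 1"
     and x: "x = (\<lambda>i. \<Sum>S\<in>F. c S * (if i \<in> S then 1 else 0))"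
    using assms(5) unfolding scaled_polytope_def indep_polytope_def by auto
  define m where "m = min \<beta> (1/4)"
  note y = y[folded m_def]
  have finF: "finite F" using assms(1,2) by (meson finite_Pow_iff rev_finite_subset)
  have "F \<noteq> {}" using c by auto
  then have e: "{} \<in> F" using assms(3) unfolding downward_closed_def by blast
  show ?thesis
  proof (cases "\<beta> = 0")
    case True
    then have "m = 0" by (simp add: m_def)
    then show ?thesis unfolding scaled_polytope_def using assms(5) True y
      by (auto simp: m_def scaled_polytope_def)
  next
    case False
    then have bp: "\<beta> > 0" using assms by simp
    define t where "t = m / \<beta>"
    have t01: "0 \<le> t" "t \<le> 1" using bp by (auto simp: t_def m_def min_def)
    define c' where "c' = (\<lambda>S. t * c S + (if S = {} then 1 - t else 0))"
    have "(\<Sum>S\<in>F. c' S) = t * (\<Sum>S\<in>F. c S) + (\<Sum>S\<in>F. (if S = {} then 1 - t else 0))"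
      unfolding c'_def by (simp add: sum.distrib sum_distrib_left)
    also have "(\<Sum>S\<in>F. (if S = {} then 1 - t else 0)) = 1 - t"
      using finF e by (simp add: sum.delta)
    finally have s1: "(\<Sum>S\<in>F. c' S) = 1" using c by simp
    have nn: "\<forall>S\<in>F. c' S \<ge> 0" using c t01 by (auto simp: c'_def)
    define x' where "x' = (\<lambda>i. \<Sum>S\<in>F. c' S * (if i \<in> S then 1 else 0))"
    have x'eq: "x' i = t * x i" for i
    proof -
      have "x' i = (\<Sum>S\<in>F. t * (c S * (if i \<in> S then 1 else 0)))
                 + (\<Sum>S\<in>F. (if S = {} then 1 - t else 0) * (if i \<in> S then 1 else 0))"
        unfolding x'_def c'_def by (simp add: sum.distrib[symmetric] algebra_simps)
      also have "(\<Sum>S\<in>F. (if S = {} then 1 - t else 0) * (if i \<in> S then 1 else (0::real))) = 0"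
        by (intro sum.neutral) auto
      finally show ?thesis by (simp add: x sum_distrib_left)
    qed
    have "x' \<in> indep_polytope I F" unfolding indep_polytope_def x'_def using nn s1 by blast
    moreover have "y = (\<lambda>i. \<beta> * x' i)" using bp by (auto simp: y x'eq t_def)
    ultimately show ?thesis unfolding scaled_polytope_def by blast
  qed
qed


lemma part2:
  fixes I :: "'a set" and \<gamma> :: real and B :: nat and p :: "'a \<Rightarrow> nat pmf"
    and chi :: "('a \<Rightarrow> real) \<Rightarrow> 'a set \<Rightarrow> 'a set pmf" and y :: "'a \<Rightarrow> real"
  assumes fin: "finite I" and g0: "0 \<le> \<gamma>"
    and pS: "\<And>i. i \<in> I \<Longrightarrow> set_pmf (p i) \<subseteq> {1..B}"
    and crs: "measure_pmf.prob (bind_pmf (indep_random_set I y) (\<lambda>R. map_pmf (\<lambda>S. (R, S)) (chi y R)))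
                   {(R, S). i \<in> S \<and> i \<in> R}
                 \<ge> \<gamma> * measure_pmf.prob (indep_random_set I y) {R. i \<in> R}"
    and iI: "i \<in> I" and j1: "j \<ge> 1"
  shows "measure_pmf.prob (bind_pmf (h_dist I p y) (\<lambda>v. map_pmf (\<lambda>w. (v, w)) (psi_a I chi y v))) {(v, w). w i = j \<and> v i = j}
          \<ge> \<gamma> * measure_pmf.prob (h_dist I p y) {v. v i = j}"
proof -
  define D where "D = (\<lambda>k. bind_pmf (bernoulli_pmf (y k)) (\<lambda>b. if b then p k else return_pmf 0))"
  define Bn where "Bn = (\<lambda>k. bernoulli_pmf (y k))"
  define I' where "I' = I - {i}"
  define Q where "Q = Pi_pmf I' 0 D"
  define Q' where "Q' = Pi_pmf I' False Bn"
  define g where "g = (\<lambda>R. emeasure (measure_pmf (chi y R)) {S. i \<in> S})"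
  define G where "G = (\<integral>\<^sup>+f. g (insert i {k\<in>I'. f k \<noteq> 0}) \<partial>Q)"
  define G' where "G' = (\<integral>\<^sup>+f. g (insert i {k\<in>I'. f k}) \<partial>Q')"
  define e where "e = emeasure (measure_pmf (Bn i)) {True}"
  define pj where "pj = emeasure (measure_pmf (p i)) {j}"
  have hd: "h_dist I p y = Pi_pmf I 0 D" unfolding h_dist_def D_def ..
  have j0: "j \<noteq> 0" using j1 by simp
  have L1: "emeasure (measure_pmf (bind_pmf (h_dist I p y) (\<lambda>v. map_pmf (\<lambda>w. (v, w)) (psi_a I chi y v)))) {(v, w). w i = j \<and> v i = j}
     = (\<integral>\<^sup>+v. (if v i = j then g {k\<in>I. v k \<noteq> 0} else 0) \<partial>h_dist I p y)"
  proof -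
    have pre: "(\<lambda>S. (v, \<lambda>k. if k\<in>S then v k else 0)) -` {(v, w). w i = j \<and> v i = j}
        = (if v i = j then {S. i\<in>S} else {})" for v :: "'a \<Rightarrow> nat"
      using j0 by auto
    show ?thesis unfolding psi_a_def g_def emeasure_bind_pmf emeasure_map_pmf map_pmf_comp
      by (rule nn_integral_cong) (simp only: pre, simp)
  qed
  also have "\<dots> = (\<integral>\<^sup>+a. \<integral>\<^sup>+f. (if a = j then g {k\<in>I. (f(i:=a)) k \<noteq> 0} else 0) \<partial>Q \<partial>D i)"
    unfolding hd Q_def I'_def by (subst Pi_nn_split[OF fin iI]) simp_all
  also have "\<dots> = (\<integral>\<^sup>+a. G * indicator {j} a \<partial>D i)"
  proof (rule nn_integral_cong)
    fix a
    have "{k\<in>I. (f(i:=j)) k \<noteq> 0} = insert i {k\<in>I'. f k \<noteq> 0}" for f :: "'a \<Rightarrow> nat"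
      using iI j0 by (auto simp: I'_def)
    then show "(\<integral>\<^sup>+f. (if a = j then g {k\<in>I. (f(i:=a)) k \<noteq> 0} else 0) \<partial>Q) = G * indicator {j} a"
      by (cases "a = j") (simp_all add: G_def)
  qed
  also have "\<dots> = G * emeasure (measure_pmf (D i)) {j}"
    by (rule nn_integral_cmult_indicator) simp
  finally have LHS: "emeasure (measure_pmf (bind_pmf (h_dist I p y) (\<lambda>v. map_pmf (\<lambda>w. (v, w)) (psi_a I chi y v)))) {(v, w). w i = j \<and> v i = j}
       = G * emeasure (measure_pmf (D i)) {j}" .
  have hj: "emeasure (measure_pmf (h_dist I p y)) {v. v i = j} = emeasure (measure_pmf (D i)) {j}"
  proof -
    have "emeasure (measure_pmf (h_dist I p y)) {v. v i = j} = (\<integral>\<^sup>+v. indicator {v. v i = j} v \<partial>h_dist I p y)"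
      by simp
    also have "\<dots> = (\<integral>\<^sup>+a. \<integral>\<^sup>+f. indicator {v. v i = j} (f(i:=a)) \<partial>Q \<partial>D i)"
      unfolding hd Q_def I'_def by (subst Pi_nn_split[OF fin iI]) simp_all
    also have "\<dots> = (\<integral>\<^sup>+a. indicator {j} a \<partial>D i)"
      by (rule nn_integral_cong) (simp add: indicator_def)
    finally show ?thesis by simp
  qed
  have Dj: "emeasure (measure_pmf (D i)) {j} = e * pj"
  proof -
    have "emeasure (measure_pmf (D i)) {j} = (\<integral>\<^sup>+b. pj * indicator {True} b \<partial>Bn i)"
      unfolding D_def Bn_def pj_def using j0
      by (simp add: indicator_def cong: if_cong) (rule nn_integral_cong, auto)
    also have "\<dots> = pj * e" unfolding e_def by (rule nn_integral_cmult_indicator) simp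
    finally show ?thesis by (simp add: mult.commute)
  qed
  have Rs: "indep_random_set I y = map_pmf (\<lambda>b. {k\<in>I. b k}) (Pi_pmf I False Bn)"
    unfolding indep_random_set_def Bn_def ..
  have R1: "emeasure (measure_pmf (bind_pmf (indep_random_set I y) (\<lambda>R. map_pmf (\<lambda>S. (R, S)) (chi y R))))
                   {(R, S). i \<in> S \<and> i \<in> R} = G' * e"
  proof -
    have "emeasure (measure_pmf (bind_pmf (indep_random_set I y) (\<lambda>R. map_pmf (\<lambda>S. (R, S)) (chi y R))))
                   {(R, S). i \<in> S \<and> i \<in> R} = (\<integral>\<^sup>+b. (if b i then g {k\<in>I. b k} else 0) \<partial>Pi_pmf I False Bn)"
      unfolding Rs g_def using iI
      by (simp add: map_pmf_comp) (rule nn_integral_cong, auto intro: arg_cong2[where f=emeasure])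
    also have "\<dots> = (\<integral>\<^sup>+c. \<integral>\<^sup>+f. (if (f(i:=c)) i then g {k\<in>I. (f(i:=c)) k} else 0) \<partial>Q' \<partial>Bn i)"
      unfolding Q'_def I'_def by (subst Pi_nn_split[OF fin iI]) simp_all
    also have "\<dots> = (\<integral>\<^sup>+c. G' * indicator {True} c \<partial>Bn i)"
    proof (rule nn_integral_cong)
      fix c
      have "{k\<in>I. (f(i:=True)) k} = insert i {k\<in>I'. f k}" for f :: "'a \<Rightarrow> bool"
        using iI by (auto simp: I'_def)
      then show "(\<integral>\<^sup>+f. (if (f(i:=c)) i then g {k\<in>I. (f(i:=c)) k} else 0) \<partial>Q') = G' * indicator {True} c"
        by (cases c) (simp_all add: G'_def)
    qed
    also have "\<dots> = G' * e" unfolding e_def by (rule nn_integral_cmult_indicator) simp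
    finally show ?thesis .
  qed
  have R2: "emeasure (measure_pmf (indep_random_set I y)) {R. i \<in> R} = e"
  proof -
    have "emeasure (measure_pmf (indep_random_set I y)) {R. i \<in> R} = (\<integral>\<^sup>+b. indicator {b. b i} b \<partial>Pi_pmf I False Bn)"
      unfolding Rs using iI by simp
    also have "\<dots> = (\<integral>\<^sup>+c. \<integral>\<^sup>+f. indicator {b. b i} (f(i:=c)) \<partial>Q' \<partial>Bn i)"
      unfolding Q'_def I'_def by (subst Pi_nn_split[OF fin iI]) simp_all
    also have "\<dots> = (\<integral>\<^sup>+c. indicator {True} c \<partial>Bn i)"
      by (rule nn_integral_cong) (simp add: indicator_def)
    finally show ?thesis unfolding e_def by simp
  qed
  have GG: "G' = G"
  proof -
    have mD: "map_pmf (\<lambda>x. x \<noteq> 0) (D k) = Bn k" if "k \<in> I'" for k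
    proof -
      have kI: "k \<in> I" using that by (simp add: I'_def)
      have "map_pmf (\<lambda>x. x \<noteq> 0) (p k) = return_pmf True"
        using pS[OF kI] by (subst map_pmf_eq_return_pmf_iff) auto
      then have "map_pmf (\<lambda>x. x \<noteq> 0) (D k) = bind_pmf (Bn k) return_pmf"
        unfolding D_def Bn_def map_bind_pmf
        by (intro bind_pmf_cong) auto
      then show ?thesis by (simp add: bind_return_pmf')
    qed
    have "Q' = Pi_pmf I' False (\<lambda>k. map_pmf (\<lambda>x. x \<noteq> 0) (D k))"
      unfolding Q'_def by (intro Pi_pmf_cong refl mD[symmetric])
    also have "\<dots> = map_pmf (\<lambda>h. (\<lambda>x. x \<noteq> 0) \<circ> h) Q"
      unfolding Q_def by (rule Pi_pmf_map) (use fin in \<open>auto simp: I'_def\<close>)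
    finally show ?thesis unfolding G'_def G_def by simp
  qed
  have crs': "ennreal \<gamma> * e \<le> G * e"
  proof -
    have "ennreal (\<gamma> * measure_pmf.prob (indep_random_set I y) {R. i \<in> R}) \<le>
          ennreal (measure_pmf.prob (bind_pmf (indep_random_set I y) (\<lambda>R. map_pmf (\<lambda>S. (R, S)) (chi y R)))
                   {(R, S). i \<in> S \<and> i \<in> R})"
      using crs by (rule ennreal_leI)
    then show ?thesis using R1 R2 GG g0
      by (simp add: measure_pmf.emeasure_eq_measure ennreal_mult)
  qed
  have "ennreal \<gamma> * (e * pj) \<le> G * (e * pj)"
    using mult_right_mono[OF crs', of pj] by (simp add: mult.assoc)
  then have "ennreal (\<gamma> * measure_pmf.prob (h_dist I p y) {v. v i = j}) \<le>
      ennreal (measure_pmf.prob (bind_pmf (h_dist I p y) (\<lambda>v. map_pmf (\<lambda>w. (v, w)) (psi_a I chi y v))) {(v, w). w i = j \<and> v i = j})"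
    using LHS hj Dj g0
    by (simp add: measure_pmf.emeasure_eq_measure ennreal_mult)
  then show ?thesis by (simp add: ennreal_le_iff)
qed


theorem lemma3:
  fixes I :: "'a set" and F :: "'a set set" and \<beta> \<gamma> :: real and B :: nat
    and p :: "'a \<Rightarrow> nat pmf"
    and chi :: "('a \<Rightarrow> real) \<Rightarrow> 'a set \<Rightarrow> 'a set pmf"
    and ybar :: "'a \<Rightarrow> real"
  assumes "finite I" and "F \<subseteq> Pow I" and "downward_closed F"
    and "0 \<le> \<beta>" and "\<beta> \<le> 1" and "0 \<le> \<gamma>" and "\<gamma> \<le> 1" and "B \<ge> 1"
    and "\<And>i. i \<in> I \<Longrightarrow> set_pmf (p i) \<subseteq> {1..B}"
    and "monotone_balanced_CRS I F \<beta> \<gamma> chi"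
    and "ybar \<in> scaled_polytope (min \<beta> (1/4)) (indep_polytope I F)"
  shows "CRS_wrt I B (h_dist I p ybar) \<gamma> (psi_a I chi ybar) \<and> monotone_CRS I B (psi_a I chi ybar)"
proof -
  have yb: "ybar \<in> scaled_polytope \<beta> (indep_polytope I F)"
    using scaled_mono[OF assms(1-4,11)] .
  have C: "\<And>i. i \<in> I \<Longrightarrow> measure_pmf.prob (bind_pmf (indep_random_set I ybar) (\<lambda>R. map_pmf (\<lambda>S. (R, S)) (chi ybar R)))
                   {(R, S). i \<in> S \<and> i \<in> R}
                 \<ge> \<gamma> * measure_pmf.prob (indep_random_set I ybar) {R. i \<in> R}"
    "\<And>i R R'. i \<in> R \<Longrightarrow> R \<subseteq> R' \<Longrightarrow> R' \<subseteq> I \<Longrightarrow>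
            measure_pmf.prob (chi ybar R) {S. i \<in> S} \<ge> measure_pmf.prob (chi ybar R') {S. i \<in> S}"
    using assms(10) yb unfolding monotone_balanced_CRS_def by blast+
  have A: "CRS_wrt I B (h_dist I p ybar) \<gamma> (psi_a I chi ybar)"
    unfolding CRS_wrt_def
  proof (intro conjI ballI)
    fix v w i assume "w \<in> set_pmf (psi_a I chi ybar v)"
    then show "\<forall>i. w i = 0 \<or> w i = v i" by (auto simp: psi_a_def)
  next
    fix i j assume i: "i \<in> I" and j: "j \<in> {1..B}"
    show "measure_pmf.prob (bind_pmf (h_dist I p ybar) (\<lambda>v. map_pmf (\<lambda>w. (v, w)) (psi_a I chi ybar v))) {(v, w). w i = j \<and> v i = j}
          \<ge> \<gamma> * measure_pmf.prob (h_dist I p ybar) {v. v i = j}"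
      using part2[where I=I and \<gamma>=\<gamma> and p=p and B=B and i=i and y=ybar and chi=chi and j=j] assms(1,6,9) C(1)[OF i] i j by auto
  qed
  have M: "monotone_CRS I B (psi_a I chi ybar)"
    unfolding monotone_CRS_def
  proof (intro ballI impI allI)
    fix u w i assume u: "u \<in> lattice_dom I B" and w: "w \<in> lattice_dom I B" and i: "i \<in> I"
      and eq: "u i = w i" and le: "\<forall>k. u k \<le> w k"
    show "measure_pmf.prob (psi_a I chi ybar u) {x. x i = u i} \<ge> measure_pmf.prob (psi_a I chi ybar w) {x. x i = w i}"
    proof (cases "u i = 0")
      case True
      have "(\<lambda>S k. if k \<in> S then u k else 0) -` {x. x i = u i} = UNIV" using True by auto
      then have "measure_pmf.prob (psi_a I chi ybar u) {x. x i = u i} = 1"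
        by (simp add: psi_a_def)
      then show ?thesis by simp
    next
      case False
      have e1: "(\<lambda>S k. if k \<in> S then u k else 0) -` {x. x i = u i} = {S. i \<in> S}" using False by auto
      have e2: "(\<lambda>S k. if k \<in> S then w k else 0) -` {x. x i = w i} = {S. i \<in> S}" using False eq by auto
      have "measure_pmf.prob (chi ybar {k\<in>I. u k \<noteq> 0}) {S. i \<in> S} \<ge> measure_pmf.prob (chi ybar {k\<in>I. w k \<noteq> 0}) {S. i \<in> S}"
      proof (rule C(2))
        show "i \<in> {k\<in>I. u k \<noteq> 0}" using i False by simp
        show "{k\<in>I. u k \<noteq> 0} \<subseteq> {k\<in>I. w k \<noteq> 0}" using le by (auto intro: less_le_trans)
      qed auto
      then show ?thesis unfolding psi_a_def measure_map_pmf e1 e2 .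
    qed
  qed
  show ?thesis using A M by blast
qed

end
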